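(* Let $w \in S_n$ with Lehmer code $L(w) = (L_1,\dots,L_n)$. Then $w$ avoids the patterns $1432$ and $312$ if and only if $L(w)$ satisfies all three of the following rules: (1) $L_i - L_{i+1} \le 1$ for all $1 \le i < n$; (2) $L_i - L_{i+1} \ge -1$ for all $1 \le i < n$; (3) whenever $i < j$ with $L_i < L_{i+1}$ and $L_j < L_{j+1}$, there is some $k$ with $i < k < j$ such that $L_k > L_{k+1}$.
   Context: The Lehmer code of $w \in S_n$ is $L(w) = (L_1,\dots,L_n)$ with $L_i = |\{j > i : w(j) < w(i)\}|$. A permutation $w$ contains a pattern $p \in S_k$ if there are indices $i_1 < \dots < i_k$ with $w(i_1),\dots,w(i_k)$ in the same relative order as $p(1),\dots,p(k)$; otherwise it avoids $p$. *)

theory Defs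
  imports "HOL-Combinatorics.Permutations"
begin

text \<open>A permutation w of S_n is a function w :: nat => nat with w permutes {1..n}
  (one-line notation w(1),...,w(n)).\<close>

definition lehmer :: "nat \<Rightarrow> (nat \<Rightarrow> nat) \<Rightarrow> nat \<Rightarrow> nat" where
  "lehmer n w i = card {j. i < j \<and> j \<le> n \<and> w j < w i}"

text \<open>A pattern p in S_k is given in one-line notation as the list [p(1),...,p(k)].
  w contains p if there are indices i_1 < ... < i_k in {1..n} with
  w(i_1),...,w(i_k) in the same relative order as p(1),...,p(k).\<close>

definition contains :: "nat \<Rightarrow> (nat \<Rightarrow> nat) \<Rightarrow> nat list \<Rightarrow> bool" where
  "contains n w p \<longleftrightarrow> (\<exists>f :: nat \<Rightarrow> nat.
      (\<forall>a b. 1 \<le> a \<longrightarrow> a < b \<longrightarrow> b \<le> length p \<longrightarrow> f a < f b) \<and>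
      (\<forall>a. 1 \<le> a \<longrightarrow> a \<le> length p \<longrightarrow> 1 \<le> f a \<and> f a \<le> n) \<and>
      (\<forall>a b. 1 \<le> a \<longrightarrow> a \<le> length p \<longrightarrow> 1 \<le> b \<longrightarrow> b \<le> length p \<longrightarrow>
          (w (f a) < w (f b) \<longleftrightarrow> p ! (a - 1) < p ! (b - 1))))"

definition avoids :: "nat \<Rightarrow> (nat \<Rightarrow> nat) \<Rightarrow> nat list \<Rightarrow> bool" where
  "avoids n w p \<longleftrightarrow> \<not> contains n w p"

end

theory Submission
  imports Defs
begin

lemma fin_le: "finite {j::nat. P j \<and> j \<le> n}"
  by (rule finite_subset[of _ "{..n}"]) auto

lemma lehmer_asc:
  assumes "inj w" "w i < w (Suc i)"
  shows "lehmer n w (Suc i) = lehmer n w i + card {j. Suc i < j \<and> j \<le> n \<and> w i < w j \<and> w j < w (Suc i)}"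
proof -
  have e: "{j. Suc i < j \<and> j \<le> n \<and> w j < w (Suc i)} = {j. i < j \<and> j \<le> n \<and> w j < w i} \<union> {j. Suc i < j \<and> j \<le> n \<and> w i < w j \<and> w j < w (Suc i)}"
  proof (intro set_eqI iffI)
    fix j assume "j \<in> {j. Suc i < j \<and> j \<le> n \<and> w j < w (Suc i)}"
    moreover have "w j \<noteq> w i" if "Suc i < j" using assms(1) that by (metis Suc_lessD inj_eq less_irrefl)
    ultimately show "j \<in> {j. i < j \<and> j \<le> n \<and> w j < w i} \<union> {j. Suc i < j \<and> j \<le> n \<and> w i < w j \<and> w j < w (Suc i)}"
      by (auto simp: linorder_neq_iff)
  next
    fix j assume "j \<in> {j. i < j \<and> j \<le> n \<and> w j < w i} \<union> {j. Suc i < j \<and> j \<le> n \<and> w i < w j \<and> w j < w (Suc i)}"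
    then show "j \<in> {j. Suc i < j \<and> j \<le> n \<and> w j < w (Suc i)}" using assms(2)
      by (auto simp: Suc_lessI) (metis Suc_lessI less_irrefl order.strict_trans)
  qed
  have "card ({j. i < j \<and> j \<le> n \<and> w j < w i} \<union> {j. Suc i < j \<and> j \<le> n \<and> w i < w j \<and> w j < w (Suc i)})
     = card {j. i < j \<and> j \<le> n \<and> w j < w i} + card {j. Suc i < j \<and> j \<le> n \<and> w i < w j \<and> w j < w (Suc i)}"
    by (rule card_Un_disjoint) (auto intro: finite_subset[of _ "{..n}"])
  then show ?thesis unfolding lehmer_def e by simp
qed

lemma lehmer_desc:
  assumes "inj w" "w (Suc i) < w i" "Suc i \<le> n"
  shows "lehmer n w i = Suc (lehmer n w (Suc i) + card {j. Suc i < j \<and> j \<le> n \<and> w (Suc i) < w j \<and> w j < w i})"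
proof -
  have e: "{j. i < j \<and> j \<le> n \<and> w j < w i} = insert (Suc i) ({j. Suc i < j \<and> j \<le> n \<and> w j < w (Suc i)} \<union> {j. Suc i < j \<and> j \<le> n \<and> w (Suc i) < w j \<and> w j < w i})"
  proof (intro set_eqI iffI)
    fix j assume "j \<in> {j. i < j \<and> j \<le> n \<and> w j < w i}"
    moreover have "w j \<noteq> w (Suc i)" if "Suc i < j" using assms(1) that by (metis inj_eq less_irrefl)
    ultimately show "j \<in> insert (Suc i) ({j. Suc i < j \<and> j \<le> n \<and> w j < w (Suc i)} \<union> {j. Suc i < j \<and> j \<le> n \<and> w (Suc i) < w j \<and> w j < w i})"
      by (auto simp: linorder_neq_iff Suc_lessI)
  next
    fix j assume "j \<in> insert (Suc i) ({j. Suc i < j \<and> j \<le> n \<and> w j < w (Suc i)} \<union> {j. Suc i < j \<and> j \<le> n \<and> w (Suc i) < w j \<and> w j < w i})"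
    then show "j \<in> {j. i < j \<and> j \<le> n \<and> w j < w i}" using assms(2,3)
      by auto
  qed
  have "card ({j. Suc i < j \<and> j \<le> n \<and> w j < w (Suc i)} \<union> {j. Suc i < j \<and> j \<le> n \<and> w (Suc i) < w j \<and> w j < w i})
     = card {j. Suc i < j \<and> j \<le> n \<and> w j < w (Suc i)} + card {j. Suc i < j \<and> j \<le> n \<and> w (Suc i) < w j \<and> w j < w i}"
    by (rule card_Un_disjoint) (auto intro: finite_subset[of _ "{..n}"])
  moreover have "finite ({j. Suc i < j \<and> j \<le> n \<and> w j < w (Suc i)} \<union> {j. Suc i < j \<and> j \<le> n \<and> w (Suc i) < w j \<and> w j < w i})"
    by (auto intro: finite_subset[of _ "{..n}"])
  ultimately show ?thesis unfolding lehmer_def e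
    by (simp add: lehmer_def)
qed

lemma all3: "(\<forall>a::nat. 1 \<le> a \<longrightarrow> a \<le> 3 \<longrightarrow> P a) \<longleftrightarrow> P 1 \<and> P 2 \<and> P 3"
proof -
  have "a \<in> {1,2,3}" if "1 \<le> a" "a \<le> 3" for a::nat using that by auto
  then show ?thesis by auto
qed

lemma all4: "(\<forall>a::nat. 1 \<le> a \<longrightarrow> a \<le> 4 \<longrightarrow> P a) \<longleftrightarrow> P 1 \<and> P 2 \<and> P 3 \<and> P 4"
proof -
  have "a \<in> {1,2,3,4}" if "1 \<le> a" "a \<le> 4" for a::nat using that by auto
  then show ?thesis by auto
qed

lemma c312: "contains n w [3,1,2] \<longleftrightarrow> (\<exists>a b c. 1 \<le> a \<and> a < b \<and> b < c \<and> c \<le> n \<and> w b < w c \<and> w c < w a)"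
proof
  assume "contains n w [3,1,2]"
  then obtain f where m: "\<forall>a b. 1 \<le> a \<longrightarrow> a < b \<longrightarrow> b \<le> length ([3,1,2]::nat list) \<longrightarrow> f a < f b"
    and r: "\<forall>a. 1 \<le> a \<longrightarrow> a \<le> length ([3,1,2]::nat list) \<longrightarrow> 1 \<le> f a \<and> f a \<le> n"
    and o: "\<forall>a b. 1 \<le> a \<longrightarrow> a \<le> length ([3,1,2]::nat list) \<longrightarrow> 1 \<le> b \<longrightarrow> b \<le> length ([3,1,2]::nat list) \<longrightarrow> (w (f a) < w (f b) \<longleftrightarrow> [3,1,2::nat] ! (a - 1) < [3,1,2] ! (b - 1))"
    unfolding contains_def by blast
  have "f 1 < f 2" "f 2 < f 3" using m by auto
  moreover have "1 \<le> f 1" "f 3 \<le> n" using r by auto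
  moreover have "w (f 2) < w (f 3)" using o[rule_format, of 2 3] by simp
  moreover have "w (f 3) < w (f 1)" using o[rule_format, of 3 1] by simp
  ultimately show "\<exists>a b c. 1 \<le> a \<and> a < b \<and> b < c \<and> c \<le> n \<and> w b < w c \<and> w c < w a" by blast
next
  assume "\<exists>a b c. 1 \<le> a \<and> a < b \<and> b < c \<and> c \<le> n \<and> w b < w c \<and> w c < w a"
  then obtain a b c where h: "1 \<le> a" "a < b" "b < c" "c \<le> n" "w b < w c" "w c < w a" by blast
  define f where "f = (\<lambda>k::nat. if k = 1 then a else if k = 2 then b else c)"
  have m: "\<forall>x y. 1 \<le> x \<longrightarrow> x < y \<longrightarrow> y \<le> 3 \<longrightarrow> f x < f y"
  proof (intro allI impI)
    fix x y :: nat assume "1 \<le> x" "x < y" "y \<le> 3"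
    then have "x \<in> {1,2} \<and> y \<in> {2,3}" by auto
    then show "f x < f y" using h \<open>x < y\<close> by (auto simp: f_def)
  qed
  show "contains n w [3,1,2]" unfolding contains_def
    apply (rule exI[of _ f])
    using m h by (simp add: all3 f_def)
qed

lemma c1432: "contains n w [1,4,3,2] \<longleftrightarrow> (\<exists>a b c d. 1 \<le> a \<and> a < b \<and> b < c \<and> c < d \<and> d \<le> n \<and> w a < w d \<and> w d < w c \<and> w c < w b)"
proof
  assume "contains n w [1,4,3,2]"
  then obtain f where m: "\<forall>a b. 1 \<le> a \<longrightarrow> a < b \<longrightarrow> b \<le> length ([1,4,3,2]::nat list) \<longrightarrow> f a < f b"
    and r: "\<forall>a. 1 \<le> a \<longrightarrow> a \<le> length ([1,4,3,2]::nat list) \<longrightarrow> 1 \<le> f a \<and> f a \<le> n"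
    and o: "\<forall>a b. 1 \<le> a \<longrightarrow> a \<le> length ([1,4,3,2]::nat list) \<longrightarrow> 1 \<le> b \<longrightarrow> b \<le> length ([1,4,3,2]::nat list) \<longrightarrow> (w (f a) < w (f b) \<longleftrightarrow> [1,4,3,2::nat] ! (a - 1) < [1,4,3,2] ! (b - 1))"
    unfolding contains_def by blast
  have "f 1 < f 2" "f 2 < f 3" "f 3 < f 4" using m by auto
  moreover have "1 \<le> f 1" "f 4 \<le> n" using r by auto
  moreover have "w (f 1) < w (f 4)" using o[rule_format, of 1 4] by simp
  moreover have "w (f 4) < w (f 3)" using o[rule_format, of 4 3] by simp
  moreover have "w (f 3) < w (f 2)" using o[rule_format, of 3 2] by simp
  ultimately show "\<exists>a b c d. 1 \<le> a \<and> a < b \<and> b < c \<and> c < d \<and> d \<le> n \<and> w a < w d \<and> w d < w c \<and> w c < w b" by blast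
next
  assume "\<exists>a b c d. 1 \<le> a \<and> a < b \<and> b < c \<and> c < d \<and> d \<le> n \<and> w a < w d \<and> w d < w c \<and> w c < w b"
  then obtain a b c d where h: "1 \<le> a" "a < b" "b < c" "c < d" "d \<le> n" "w a < w d" "w d < w c" "w c < w b" by blast
  define f where "f = (\<lambda>k::nat. if k = 1 then a else if k = 2 then b else if k = 3 then c else d)"
  have m: "\<forall>x y. 1 \<le> x \<longrightarrow> x < y \<longrightarrow> y \<le> 4 \<longrightarrow> f x < f y"
  proof (intro allI impI)
    fix x y :: nat assume "1 \<le> x" "x < y" "y \<le> 4"
    then have "x \<in> {1,2,3} \<and> y \<in> {2,3,4}" by auto
    then show "f x < f y" using h \<open>x < y\<close> by (auto simp: f_def)
  qed
  show "contains n w [1,4,3,2]" unfolding contains_def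
    apply (rule exI[of _ f])
    using m h by (simp add: all4 f_def)
qed


lemma step_exists: "a \<le> b \<Longrightarrow> P a \<Longrightarrow> \<not> P b \<Longrightarrow> \<exists>i. a \<le> i \<and> i < b \<and> P i \<and> \<not> P (Suc i)"
proof (induction b)
  case 0 then show ?case by auto
next
  case (Suc b)
  show ?case
  proof (cases "P b")
    case True then show ?thesis using Suc.prems by (intro exI[of _ b]) (auto simp: le_Suc_eq)
  next
    case False
    then have "a \<le> b" using Suc.prems by (auto simp: le_Suc_eq)
    then obtain i where "a \<le> i" "i < b" "P i" "\<not> P (Suc i)" using Suc.IH Suc.prems False by blast
    then show ?thesis by (intro exI[of _ i]) auto
  qed
qed

lemma chain:
  assumes "\<forall>k. i < k \<and> k \<le> j \<longrightarrow> (w::nat\<Rightarrow>nat) k < w (Suc k)"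
  shows "Suc i \<le> m \<Longrightarrow> m \<le> Suc j \<Longrightarrow> w (Suc i) \<le> w m"
proof (induction m)
  case 0 then show ?case by auto
next
  case (Suc m)
  show ?case
  proof (cases "Suc i = Suc m")
    case True then show ?thesis by simp
  next
    case False
    then have "Suc i \<le> m" using Suc.prems by simp
    then have "w (Suc i) \<le> w m" using Suc by simp
    moreover have "w m < w (Suc m)" using assms Suc.prems \<open>Suc i \<le> m\<close> by auto
    ultimately show ?thesis by simp
  qed
qed

lemma no312:
  assumes inj: "inj (w::nat\<Rightarrow>nat)"
    and W1: "\<forall>i. 1 \<le> i \<and> i < n \<longrightarrow> \<not>(\<exists>j. Suc i < j \<and> j \<le> n \<and> w (Suc i) < w j \<and> w j < w i)"
  shows "\<not>(\<exists>a b c. 1 \<le> a \<and> a < b \<and> b < c \<and> c \<le> n \<and> w b < w c \<and> w c < w a)"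
proof
  assume "\<exists>a b c. 1 \<le> a \<and> a < b \<and> b < c \<and> c \<le> n \<and> w b < w c \<and> w c < w a"
  then obtain a b c where h: "1 \<le> a" "a < b" "b < c" "c \<le> n" "w b < w c" "w c < w a" by blast
  obtain i where i: "a \<le> i" "i < b" "w c < w i" "\<not> w c < w (Suc i)"
    using step_exists[of a b "\<lambda>i. w c < w i"] h by auto
  have "Suc i \<noteq> c" using i h by linarith
  then have "w (Suc i) \<noteq> w c" using inj by (auto simp: inj_eq)
  then have "w (Suc i) < w c" using i by simp
  moreover have "1 \<le> i \<and> i < n" "Suc i < c" using i h by linarith+
  ultimately show False using W1 h i by blast
qed

lemma no1432:
  assumes inj: "inj (w::nat\<Rightarrow>nat)"
    and W2: "\<forall>i. 1 \<le> i \<and> i < n \<longrightarrow> \<not>(\<exists>j1 j2. Suc i < j1 \<and> j1 < j2 \<and> j2 \<le> n \<and> w i < w j1 \<and> w j1 < w (Suc i) \<and> w i < w j2 \<and> w j2 < w (Suc i))"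
    and W3: "\<forall>i j. 1 \<le> i \<and> i < j \<and> j < n \<and> (\<exists>c. Suc i < c \<and> c \<le> n \<and> w i < w c \<and> w c < w (Suc i)) \<and> (\<exists>d. Suc j < d \<and> d \<le> n \<and> w j < w d \<and> w d < w (Suc j)) \<longrightarrow> (\<exists>k. i < k \<and> k < j \<and> w (Suc k) < w k)"
  shows "\<forall>a b c d. b - a = g \<and> 1 \<le> a \<and> a < b \<and> b < c \<and> c < d \<and> d \<le> n \<and> w a < w d \<and> w d < w c \<and> w c < w b \<longrightarrow> False"
proof (induction g rule: less_induct)
  case (less g)
  show ?case
  proof (intro allI impI)
    fix a b c d assume "b - a = g \<and> 1 \<le> a \<and> a < b \<and> b < c \<and> c < d \<and> d \<le> n \<and> w a < w d \<and> w d < w c \<and> w c < w b"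
    then have g: "b - a = g" and h: "1 \<le> a" "a < b" "b < c" "c < d" "d \<le> n" "w a < w d" "w d < w c" "w c < w b" by auto
    show False
    proof (cases "\<exists>m. a < m \<and> m < b \<and> w m < w d")
      case True
      then obtain m where m: "a < m" "m < b" "w m < w d" by blast
      have bm: "b - m < g" using m g by auto
      have "b - m = b - m \<and> 1 \<le> m \<and> m < b \<and> b < c \<and> c < d \<and> d \<le> n \<and> w m < w d \<and> w d < w c \<and> w c < w b" using m h by linarith
      with less.IH[OF bm] show False by blast
    next
      case F1: False
      show False
      proof (cases "\<exists>m. a < m \<and> m < b \<and> w c < w m")
        case True
        then obtain m where m: "a < m" "m < b" "w c < w m" by blast
        have am: "m - a < g" using m g h by auto
        have "m - a = m - a \<and> 1 \<le> a \<and> a < m \<and> m < c \<and> c < d \<and> d \<le> n \<and> w a < w d \<and> w d < w c \<and> w c < w m" using m h by linarith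
        with less.IH[OF am] show False by blast
      next
        case F2: False
        have mid: "w d < w m \<and> w m < w c" if "a < m" "m < b" for m
        proof -
          have "w m \<noteq> w d" "w m \<noteq> w c" using inj that h by (auto simp: inj_eq)
          then show ?thesis using F1 F2 that by auto
        qed
        show False
        proof (cases "\<exists>k. a < k \<and> Suc k < b \<and> w (Suc k) < w k")
          case True
          then obtain k where k: "a < k" "Suc k < b" "w (Suc k) < w k" by blast
          have "w d < w (Suc k)" using mid[of "Suc k"] k by auto
          moreover have "k - a < g" using k g h by auto
          moreover have "k < d" using k h by auto
          moreover have "k - a = k - a \<and> 1 \<le> a \<and> a < k \<and> k < Suc k \<and> Suc k < d \<and> d \<le> n \<and> w a < w d \<and> w d < w (Suc k) \<and> w (Suc k) < w k" using k h \<open>w d < w (Suc k)\<close> by linarith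
          ultimately show False using less.IH by blast
        next
          case F3: False
          show False
          proof (cases "b = Suc a")
            case True
            have an: "1 \<le> a \<and> a < n" using h by linarith
            have "\<exists>j1 j2. Suc a < j1 \<and> j1 < j2 \<and> j2 \<le> n \<and> w a < w j1 \<and> w j1 < w (Suc a) \<and> w a < w j2 \<and> w j2 < w (Suc a)"
              using h True by (intro exI[of _ c] exI[of _ d]) auto
            then show False using W2 an by blast
          next
            case False
            define j where "j = b - 1"
            have j: "a < j" "Suc j = b" using False h unfolding j_def by auto
            have "w d < w (Suc a)" using mid[of "Suc a"] j by auto
            moreover have "w j < w c" using mid[of j] j by auto
            ultimately have "(\<exists>c. Suc a < c \<and> c \<le> n \<and> w a < w c \<and> w c < w (Suc a)) \<and> (\<exists>d. Suc j < d \<and> d \<le> n \<and> w j < w d \<and> w d < w (Suc j))"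
              using h j by (intro conjI exI[of _ c] exI[of _ d]) auto
            moreover have "1 \<le> a \<and> a < j \<and> j < n" using h j by linarith
            ultimately have "\<exists>k. a < k \<and> k < j \<and> w (Suc k) < w k"
              using W3 by blast
            then show False using F3 j by auto
          qed
        qed
      qed
    qed
  qed
qed


lemma main_w:
  assumes inj: "inj (w::nat\<Rightarrow>nat)"
  shows "(\<not>(\<exists>a b c. 1 \<le> a \<and> a < b \<and> b < c \<and> c \<le> n \<and> w b < w c \<and> w c < w a) \<and>
          \<not>(\<exists>a b c d. 1 \<le> a \<and> a < b \<and> b < c \<and> c < d \<and> d \<le> n \<and> w a < w d \<and> w d < w c \<and> w c < w b))
     \<longleftrightarrow> ((\<forall>i. 1 \<le> i \<and> i < n \<longrightarrow> \<not>(\<exists>j. Suc i < j \<and> j \<le> n \<and> w (Suc i) < w j \<and> w j < w i)) \<and>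
          (\<forall>i. 1 \<le> i \<and> i < n \<longrightarrow> \<not>(\<exists>j1 j2. Suc i < j1 \<and> j1 < j2 \<and> j2 \<le> n \<and> w i < w j1 \<and> w j1 < w (Suc i) \<and> w i < w j2 \<and> w j2 < w (Suc i))) \<and>
          (\<forall>i j. 1 \<le> i \<and> i < j \<and> j < n \<and> (\<exists>c. Suc i < c \<and> c \<le> n \<and> w i < w c \<and> w c < w (Suc i)) \<and> (\<exists>d. Suc j < d \<and> d \<le> n \<and> w j < w d \<and> w d < w (Suc j)) \<longrightarrow> (\<exists>k. i < k \<and> k < j \<and> w (Suc k) < w k)))"
  (is "(\<not> ?P312 \<and> \<not> ?P1432) \<longleftrightarrow> (?W1 \<and> ?W2 \<and> ?W3)")
proof
  assume "\<not> ?P312 \<and> \<not> ?P1432"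
  then have n312: "\<not> ?P312" and n1432: "\<not> ?P1432" by auto
  have W1: ?W1
  proof (intro allI impI notI)
    fix i assume i: "1 \<le> i \<and> i < n" and "\<exists>j. Suc i < j \<and> j \<le> n \<and> w (Suc i) < w j \<and> w j < w i"
    then obtain j where "Suc i < j" "j \<le> n" "w (Suc i) < w j" "w j < w i" by blast
    then show False using n312 i by (metis lessI)
  qed
  have W2: ?W2
  proof (intro allI impI notI)
    fix i assume i: "1 \<le> i \<and> i < n" and "\<exists>j1 j2. Suc i < j1 \<and> j1 < j2 \<and> j2 \<le> n \<and> w i < w j1 \<and> w j1 < w (Suc i) \<and> w i < w j2 \<and> w j2 < w (Suc i)"
    then obtain j1 j2 where j: "Suc i < j1" "j1 < j2" "j2 \<le> n" "w i < w j1" "w j1 < w (Suc i)" "w i < w j2" "w j2 < w (Suc i)" by blast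
    have "w j1 \<noteq> w j2" using inj j by (auto simp: inj_eq)
    then consider "w j2 < w j1" | "w j1 < w j2" by linarith
    then show False
    proof cases
      case 1
      have "1 \<le> i \<and> i < Suc i \<and> Suc i < j1 \<and> j1 < j2 \<and> j2 \<le> n \<and> w i < w j2 \<and> w j2 < w j1 \<and> w j1 < w (Suc i)"
        using i j 1 by auto
      then show False using n1432 by blast
    next
      case 2
      have "1 \<le> Suc i \<and> Suc i < j1 \<and> j1 < j2 \<and> j2 \<le> n \<and> w j1 < w j2 \<and> w j2 < w (Suc i)"
        using i j 2 by auto
      then show False using n312 by blast
    qed
  qed
  have W3: ?W3
  proof (intro allI impI)
    fix i j assume a: "1 \<le> i \<and> i < j \<and> j < n \<and> (\<exists>c. Suc i < c \<and> c \<le> n \<and> w i < w c \<and> w c < w (Suc i)) \<and> (\<exists>d. Suc j < d \<and> d \<le> n \<and> w j < w d \<and> w d < w (Suc j))"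
    then obtain c d where c: "Suc i < c" "c \<le> n" "w i < w c" "w c < w (Suc i)"
      and d: "Suc j < d" "d \<le> n" "w j < w d" "w d < w (Suc j)" by blast
    show "\<exists>k. i < k \<and> k < j \<and> w (Suc k) < w k"
    proof (rule ccontr)
      assume nk: "\<not> (\<exists>k. i < k \<and> k < j \<and> w (Suc k) < w k)"
      have asc: "\<forall>k. i < k \<and> k \<le> j \<longrightarrow> w k < w (Suc k)"
      proof (intro allI impI)
        fix k assume k: "i < k \<and> k \<le> j"
        show "w k < w (Suc k)"
        proof (cases "k = j")
          case True then show ?thesis using d by simp
        next
          case False
          have "w k \<noteq> w (Suc k)" using inj by (auto simp: inj_eq)
          then show ?thesis using nk k False by (metis le_neq_implies_less linorder_neqE_nat)
        qed
      qed
      have ch: "w (Suc i) \<le> w m" if "Suc i \<le> m" "m \<le> Suc j" for m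
        using chain[OF asc] that by blast
      have cj: "Suc j < c"
      proof (rule ccontr)
        assume "\<not> Suc j < c"
        then have "w (Suc i) \<le> w c" using ch c by simp
        then show False using c by simp
      qed
      have wij: "w (Suc i) \<le> w j" using ch a by simp
      have "c \<noteq> d" using c d wij by auto
      then consider "c < d" | "d < c" by linarith
      then show False
      proof cases
        case 1
        have "1 \<le> Suc j \<and> Suc j < c \<and> c < d \<and> d \<le> n \<and> w c < w d \<and> w d < w (Suc j)"
          using 1 cj c d wij by auto
        then show False using n312 by blast
      next
        case 2
        have "1 \<le> i \<and> i < Suc j \<and> Suc j < d \<and> d < c \<and> c \<le> n \<and> w i < w c \<and> w c < w d \<and> w d < w (Suc j)"
          using 2 a cj c d wij by auto
        then show False using n1432 by blast
      qed
    qed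
  qed
  show "?W1 \<and> ?W2 \<and> ?W3" using W1 W2 W3 by blast
next
  assume "?W1 \<and> ?W2 \<and> ?W3"
  then have W1: ?W1 and W2: ?W2 and W3: ?W3 by auto
  have "\<not> ?P312" using no312[OF inj W1] .
  moreover have "\<not> ?P1432"
  proof
    assume ?P1432
    then obtain a b c d where "1 \<le> a \<and> a < b \<and> b < c \<and> c < d \<and> d \<le> n \<and> w a < w d \<and> w d < w c \<and> w c < w b" by blast
    then show False using no1432[OF inj W2 W3, of "b - a"] by blast
  qed
  ultimately show "\<not> ?P312 \<and> \<not> ?P1432" by blast
qed


lemma card_le1_iff: "finite (S::nat set) \<Longrightarrow> card S \<le> 1 \<longleftrightarrow> \<not>(\<exists>x y. x \<in> S \<and> y \<in> S \<and> x < y)"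
  by (auto simp: card_le_Suc0_iff_eq) (metis linorder_neqE_nat)

lemma trans_L:
  assumes inj: "inj (w::nat\<Rightarrow>nat)" and "i < n"
  defines "L \<equiv> (\<lambda>i. int (lehmer n w i))"
  shows "L i - L (i+1) \<le> 1 \<longleftrightarrow> \<not>(\<exists>j. Suc i < j \<and> j \<le> n \<and> w (Suc i) < w j \<and> w j < w i)"
    and "L i - L (i+1) \<ge> -1 \<longleftrightarrow> \<not>(\<exists>j1 j2. Suc i < j1 \<and> j1 < j2 \<and> j2 \<le> n \<and> w i < w j1 \<and> w j1 < w (Suc i) \<and> w i < w j2 \<and> w j2 < w (Suc i))"
    and "L i < L (i+1) \<longleftrightarrow> (\<exists>j. Suc i < j \<and> j \<le> n \<and> w i < w j \<and> w j < w (Suc i))"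
    and "L i > L (i+1) \<longleftrightarrow> w (Suc i) < w i"
proof -
  define M where "M = {j. Suc i < j \<and> j \<le> n \<and> w i < w j \<and> w j < w (Suc i)}"
  define N where "N = {j. Suc i < j \<and> j \<le> n \<and> w (Suc i) < w j \<and> w j < w i}"
  have fM: "finite M" unfolding M_def by (rule finite_subset[of _ "{..n}"]) auto
  have fN: "finite N" unfolding N_def by (rule finite_subset[of _ "{..n}"]) auto
  have Mex: "(\<exists>j. Suc i < j \<and> j \<le> n \<and> w i < w j \<and> w j < w (Suc i)) \<longleftrightarrow> M \<noteq> {}" unfolding M_def by auto
  have Nex: "(\<exists>j. Suc i < j \<and> j \<le> n \<and> w (Suc i) < w j \<and> w j < w i) \<longleftrightarrow> N \<noteq> {}" unfolding N_def by auto
  have M2: "(\<exists>j1 j2. Suc i < j1 \<and> j1 < j2 \<and> j2 \<le> n \<and> w i < w j1 \<and> w j1 < w (Suc i) \<and> w i < w j2 \<and> w j2 < w (Suc i))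
      \<longleftrightarrow> \<not> card M \<le> 1" unfolding card_le1_iff[OF fM] not_not
  proof
    assume "\<exists>j1 j2. Suc i < j1 \<and> j1 < j2 \<and> j2 \<le> n \<and> w i < w j1 \<and> w j1 < w (Suc i) \<and> w i < w j2 \<and> w j2 < w (Suc i)"
    then obtain j1 j2 where j: "Suc i < j1" "j1 < j2" "j2 \<le> n" "w i < w j1" "w j1 < w (Suc i)" "w i < w j2" "w j2 < w (Suc i)" by blast
    have "j1 \<in> M" "j2 \<in> M" using j unfolding M_def by auto
    then show "\<exists>x y. x \<in> M \<and> y \<in> M \<and> x < y" using j(2) by blast
  next
    assume "\<exists>x y. x \<in> M \<and> y \<in> M \<and> x < y"
    then obtain x y where xy: "x \<in> M" "y \<in> M" "x < y" by blast
    then have "Suc i < x \<and> x < y \<and> y \<le> n \<and> w i < w x \<and> w x < w (Suc i) \<and> w i < w y \<and> w y < w (Suc i)"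
      unfolding M_def by auto
    then show "\<exists>j1 j2. Suc i < j1 \<and> j1 < j2 \<and> j2 \<le> n \<and> w i < w j1 \<and> w j1 < w (Suc i) \<and> w i < w j2 \<and> w j2 < w (Suc i)" by blast
  qed
  have "w i \<noteq> w (Suc i)" using inj by (auto simp: inj_eq)
  then consider (a) "w i < w (Suc i)" | (d) "w (Suc i) < w i" by linarith
  then have "(L i - L (i+1) \<le> 1 \<longleftrightarrow> N = {}) \<and> (L i - L (i+1) \<ge> -1 \<longleftrightarrow> card M \<le> 1) \<and>
     (L i < L (i+1) \<longleftrightarrow> M \<noteq> {}) \<and> (L i > L (i+1) \<longleftrightarrow> w (Suc i) < w i)"
  proof cases
    case a
    have e: "lehmer n w (Suc i) = lehmer n w i + card M" unfolding M_def by (rule lehmer_asc[OF inj a])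
    have "N = {}" unfolding N_def using a by auto
    moreover have "card M > 0 \<longleftrightarrow> M \<noteq> {}" using fM by auto
    ultimately show ?thesis using a unfolding L_def by (simp add: e)
  next
    case d
    have e: "lehmer n w i = Suc (lehmer n w (Suc i) + card N)" unfolding N_def by (rule lehmer_desc[OF inj d]) (use assms in simp)
    have "M = {}" unfolding M_def using d by auto
    moreover have "card N = 0 \<longleftrightarrow> N = {}" using fN by auto
    ultimately show ?thesis using d unfolding L_def by (simp add: e)
  qed
  then show "L i - L (i+1) \<le> 1 \<longleftrightarrow> \<not>(\<exists>j. Suc i < j \<and> j \<le> n \<and> w (Suc i) < w j \<and> w j < w i)"
    and "L i - L (i+1) \<ge> -1 \<longleftrightarrow> \<not>(\<exists>j1 j2. Suc i < j1 \<and> j1 < j2 \<and> j2 \<le> n \<and> w i < w j1 \<and> w j1 < w (Suc i) \<and> w i < w j2 \<and> w j2 < w (Suc i))"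
    and "L i < L (i+1) \<longleftrightarrow> (\<exists>j. Suc i < j \<and> j \<le> n \<and> w i < w j \<and> w j < w (Suc i))"
    and "L i > L (i+1) \<longleftrightarrow> w (Suc i) < w i"
    using Mex Nex M2 by auto
qed

lemma swap_iff: "(A \<and> B \<longleftrightarrow> C) \<Longrightarrow> (B \<and> A \<longleftrightarrow> C)" by blast

theorem lemma11:
  fixes n :: nat and w :: "nat \<Rightarrow> nat"
  assumes "w permutes {1..n}"
  defines "L \<equiv> (\<lambda>i. int (lehmer n w i))"
  shows "(avoids n w [1,4,3,2] \<and> avoids n w [3,1,2]) \<longleftrightarrow>
    ((\<forall>i. 1 \<le> i \<and> i < n \<longrightarrow> L i - L (i+1) \<le> 1) \<and>
     (\<forall>i. 1 \<le> i \<and> i < n \<longrightarrow> L i - L (i+1) \<ge> -1) \<and>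
     (\<forall>i j. 1 \<le> i \<and> i < j \<and> j < n \<and> L i < L (i+1) \<and> L j < L (j+1) \<longrightarrow>
        (\<exists>k. i < k \<and> k < j \<and> L k > L (k+1))))"
proof -
  have inj: "inj w" using assms(1) by (rule permutes_inj)
  have T1: "L i - L (i+1) \<le> 1 \<longleftrightarrow> \<not>(\<exists>j. Suc i < j \<and> j \<le> n \<and> w (Suc i) < w j \<and> w j < w i)" if "i < n" for i
    unfolding L_def by (rule trans_L(1)[OF inj that])
  have T2: "L i - L (i+1) \<ge> -1 \<longleftrightarrow> \<not>(\<exists>j1 j2. Suc i < j1 \<and> j1 < j2 \<and> j2 \<le> n \<and> w i < w j1 \<and> w j1 < w (Suc i) \<and> w i < w j2 \<and> w j2 < w (Suc i))" if "i < n" for i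
    unfolding L_def by (rule trans_L(2)[OF inj that])
  have T3: "L i < L (i+1) \<longleftrightarrow> (\<exists>j. Suc i < j \<and> j \<le> n \<and> w i < w j \<and> w j < w (Suc i))" if "i < n" for i
    unfolding L_def by (rule trans_L(3)[OF inj that])
  have T4: "L i > L (i+1) \<longleftrightarrow> w (Suc i) < w i" if "i < n" for i
    unfolding L_def by (rule trans_L(4)[OF inj that])
  have R1: "(\<forall>i. 1 \<le> i \<and> i < n \<longrightarrow> L i - L (i+1) \<le> 1) \<longleftrightarrow>
    (\<forall>i. 1 \<le> i \<and> i < n \<longrightarrow> \<not>(\<exists>j. Suc i < j \<and> j \<le> n \<and> w (Suc i) < w j \<and> w j < w i))"
  proof -
    have "(1 \<le> i \<and> i < n \<longrightarrow> L i - L (i+1) \<le> 1) \<longleftrightarrow> (1 \<le> i \<and> i < n \<longrightarrow> \<not>(\<exists>j. Suc i < j \<and> j \<le> n \<and> w (Suc i) < w j \<and> w j < w i))" for i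
      using T1[of i] by blast
    then show ?thesis by (simp only:)
  qed
  have R2: "(\<forall>i. 1 \<le> i \<and> i < n \<longrightarrow> L i - L (i+1) \<ge> -1) \<longleftrightarrow>
    (\<forall>i. 1 \<le> i \<and> i < n \<longrightarrow> \<not>(\<exists>j1 j2. Suc i < j1 \<and> j1 < j2 \<and> j2 \<le> n \<and> w i < w j1 \<and> w j1 < w (Suc i) \<and> w i < w j2 \<and> w j2 < w (Suc i)))"
  proof -
    have "(1 \<le> i \<and> i < n \<longrightarrow> L i - L (i+1) \<ge> -1) \<longleftrightarrow> (1 \<le> i \<and> i < n \<longrightarrow> \<not>(\<exists>j1 j2. Suc i < j1 \<and> j1 < j2 \<and> j2 \<le> n \<and> w i < w j1 \<and> w j1 < w (Suc i) \<and> w i < w j2 \<and> w j2 < w (Suc i)))" for i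
      using T2[of i] by blast
    then show ?thesis by (simp only:)
  qed
  have R3: "(\<forall>i j. 1 \<le> i \<and> i < j \<and> j < n \<and> L i < L (i+1) \<and> L j < L (j+1) \<longrightarrow>
        (\<exists>k. i < k \<and> k < j \<and> L k > L (k+1))) \<longleftrightarrow>
    (\<forall>i j. 1 \<le> i \<and> i < j \<and> j < n \<and> (\<exists>c. Suc i < c \<and> c \<le> n \<and> w i < w c \<and> w c < w (Suc i)) \<and> (\<exists>d. Suc j < d \<and> d \<le> n \<and> w j < w d \<and> w d < w (Suc j)) \<longrightarrow> (\<exists>k. i < k \<and> k < j \<and> w (Suc k) < w k))"
  proof -
    have E: "(1 \<le> i \<and> i < j \<and> j < n \<and> L i < L (i+1) \<and> L j < L (j+1) \<longrightarrow> (\<exists>k. i < k \<and> k < j \<and> L k > L (k+1))) \<longleftrightarrow>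
      (1 \<le> i \<and> i < j \<and> j < n \<and> (\<exists>c. Suc i < c \<and> c \<le> n \<and> w i < w c \<and> w c < w (Suc i)) \<and> (\<exists>d. Suc j < d \<and> d \<le> n \<and> w j < w d \<and> w d < w (Suc j)) \<longrightarrow> (\<exists>k. i < k \<and> k < j \<and> w (Suc k) < w k))" for i j
    proof (cases "i < j \<and> j < n")
      case True
      have "(\<exists>k. i < k \<and> k < j \<and> L k > L (k+1)) \<longleftrightarrow> (\<exists>k. i < k \<and> k < j \<and> w (Suc k) < w k)"
        using T4 True by (meson order.strict_trans)
      then show ?thesis using T3[of i] T3[of j] True by auto
    qed auto
    show ?thesis by (simp only: E)
  qed
  show ?thesis
    unfolding R1 R2 R3 avoids_def c312 c1432
    by (rule swap_iff[OF main_w[OF inj, of n]])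
qed

end
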